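(* Let $G$ be an infinite vertex-transitive graph of degree $d$ with spectral measure $\nu$. Let $X$ be an invariant random process with $\mathbb E X_o=0$, $\mathbb E X_o^2<\infty$, whose covariance structure $c_X$ lies in $\ell^2(G)$. Then $\mu_X$ is absolutely continuous with respect to $\nu$.
   Context: The covariance structure is $c_X(v)=\mathrm{cov}(X_o,X_v)$, $o$ the root. An invariant random process has $\mathrm{Aut}(G)$-invariant joint law. With $A$ the adjacency operator and $\delta_v$ the indicator of $v$: $\nu$ is the unique finite Borel measure on $[-d,d]$ with $\langle A^k\delta_o,\delta_o\rangle=\int t^kd\nu$, and $\mu_X$ is the unique finite Borel measure on $[-d,d]$ with $\mathbb E[(A^kX)_oX_o]=\int t^kd\mu_X$ for all $k\ge0$, where $(A^kX)_v=\sum_w(A^k\delta_v)(w)X_w$. *)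

theory Defs
  imports "HOL-Probability.Probability"
begin

definition graph_automorphism :: "('v \<Rightarrow> 'v \<Rightarrow> bool) \<Rightarrow> ('v \<Rightarrow> 'v) \<Rightarrow> bool" where
  "graph_automorphism E g \<longleftrightarrow> bij g \<and> (\<forall>u v. E u v \<longleftrightarrow> E (g u) (g v))"

definition vertex_transitive :: "('v \<Rightarrow> 'v \<Rightarrow> bool) \<Rightarrow> bool" where
  "vertex_transitive E \<longleftrightarrow> (\<forall>u v. \<exists>g. graph_automorphism E g \<and> g u = v)"

definition regular_graph :: "('v \<Rightarrow> 'v \<Rightarrow> bool) \<Rightarrow> nat \<Rightarrow> bool" where
  "regular_graph E d \<longleftrightarrow> (\<forall>u v. E u v \<longrightarrow> E v u) \<and> (\<forall>v. \<not> E v v) \<and>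
     (\<forall>v. finite {w. E v w} \<and> card {w. E v w} = d)"

definition adj_op :: "('v \<Rightarrow> 'v \<Rightarrow> bool) \<Rightarrow> ('v \<Rightarrow> real) \<Rightarrow> ('v \<Rightarrow> real)" where
  "adj_op E f v = (\<Sum>w\<in>{w. E v w}. f w)"

definition adj_pow_delta :: "('v \<Rightarrow> 'v \<Rightarrow> bool) \<Rightarrow> nat \<Rightarrow> 'v \<Rightarrow> ('v \<Rightarrow> real)" where
  "adj_pow_delta E k v = (adj_op E ^^ k) (\<lambda>w. if w = v then 1 else 0)"

definition proc_pow :: "('v \<Rightarrow> 'v \<Rightarrow> bool) \<Rightarrow> nat \<Rightarrow> ('v \<Rightarrow> 'a \<Rightarrow> real) \<Rightarrow> 'v \<Rightarrow> 'a \<Rightarrow> real" where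
  "proc_pow E k X v \<omega> = (\<Sum>w | adj_pow_delta E k v w \<noteq> 0. adj_pow_delta E k v w * X w \<omega>)"

definition invariant_process :: "'a measure \<Rightarrow> ('v \<Rightarrow> 'v \<Rightarrow> bool) \<Rightarrow> ('v \<Rightarrow> 'a \<Rightarrow> real) \<Rightarrow> bool" where
  "invariant_process M E X \<longleftrightarrow> (\<forall>v. X v \<in> borel_measurable M) \<and>
     (\<forall>g. graph_automorphism E g \<longrightarrow>
        distr M (Pi\<^sub>M UNIV (\<lambda>_. borel)) (\<lambda>\<omega> v. X (g v) \<omega>) =
        distr M (Pi\<^sub>M UNIV (\<lambda>_. borel)) (\<lambda>\<omega> v. X v \<omega>))"

definition cov_struct :: "'a measure \<Rightarrow> ('v \<Rightarrow> 'a \<Rightarrow> real) \<Rightarrow> 'v \<Rightarrow> 'v \<Rightarrow> real" where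
  "cov_struct M X v0 v = (\<integral>\<omega>. (X v0 \<omega> - (\<integral>\<omega>'. X v0 \<omega>' \<partial>M)) * (X v \<omega> - (\<integral>\<omega>'. X v \<omega>' \<partial>M)) \<partial>M)"

definition finite_borel_on :: "real measure \<Rightarrow> real \<Rightarrow> bool" where
  "finite_borel_on \<mu> r \<longleftrightarrow> finite_measure \<mu> \<and> sets \<mu> = sets borel \<and> emeasure \<mu> (UNIV - {-r..r}) = 0"

end

theory Submission
  imports Defs
begin


lemma adj_op_sumT:
  assumes fin: "finite {u. E w u}" and T: "finite T" "{u. f u \<noteq> 0} \<subseteq> T"
  shows "adj_op E f w = (\<Sum>u\<in>T. if E w u then f u else 0)"
proof -
  have "(\<Sum>u\<in>T. if E w u then f u else 0) = (\<Sum>u\<in>{u\<in>T. E w u}. f u)"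
    by (simp add: sum.inter_filter T)
  also have "\<dots> = (\<Sum>u\<in>{u. E w u}. f u)"
    by (rule sum.mono_neutral_left) (use fin T in auto)
  finally show ?thesis by (simp add: adj_op_def)
qed

lemma adj_op_symm:
  assumes reg: "regular_graph E d" and T: "finite T" "{u. f u \<noteq> 0} \<subseteq> T" "{u. g u \<noteq> 0} \<subseteq> T"
  shows "(\<Sum>w\<in>T. adj_op E f w * g w) = (\<Sum>w\<in>T. f w * adj_op E g w)"
proof -
  have fin: "\<And>w. finite {u. E w u}" and sym: "\<And>u v. E u v \<Longrightarrow> E v u"
    using reg by (auto simp: regular_graph_def)
  have "(\<Sum>w\<in>T. adj_op E f w * g w) = (\<Sum>w\<in>T. \<Sum>u\<in>T. if E w u then f u * g w else 0)"
    by (auto simp: adj_op_sumT[OF fin T(1,2)] sum_distrib_right intro!: sum.cong)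
  also have "\<dots> = (\<Sum>u\<in>T. \<Sum>w\<in>T. if E w u then f u * g w else 0)"
    by (rule sum.swap)
  also have "\<dots> = (\<Sum>u\<in>T. \<Sum>w\<in>T. if E u w then f u * g w else 0)"
    by (intro sum.cong refl) (auto dest: sym)
  also have "\<dots> = (\<Sum>w\<in>T. f w * adj_op E g w)"
    by (auto simp: adj_op_sumT[OF fin T(1,3)] sum_distrib_left intro!: sum.cong)
  finally show ?thesis .
qed

lemma adj_pow_Suc: "adj_pow_delta E (Suc k) v = adj_op E (adj_pow_delta E k v)"
  by (simp add: adj_pow_delta_def)

lemma supp_adj_op:
  assumes reg: "regular_graph E d" and fin: "finite {u. f u \<noteq> 0}"
  shows "finite {w. adj_op E f w \<noteq> 0}"
proof -
  have sym: "\<And>u v. E u v \<Longrightarrow> E v u" and finN: "\<And>w. finite {u. E w u}"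
    using reg by (auto simp: regular_graph_def)
  have "{w. adj_op E f w \<noteq> 0} \<subseteq> (\<Union>u\<in>{u. f u \<noteq> 0}. {w. E u w})"
  proof
    fix w assume "w \<in> {w. adj_op E f w \<noteq> 0}"
    then have "(\<Sum>u\<in>{u. E w u}. f u) \<noteq> 0" by (simp add: adj_op_def)
    then obtain u where "E w u" "f u \<noteq> 0" using sum.neutral[of "{u. E w u}" f] by blast
    then show "w \<in> (\<Union>u\<in>{u. f u \<noteq> 0}. {w. E u w})" using sym by blast
  qed
  moreover have "finite (\<Union>u\<in>{u. f u \<noteq> 0}. {w. E u w})" using fin finN by auto
  ultimately show ?thesis by (rule finite_subset)
qed

lemma supp_adj_pow:
  assumes reg: "regular_graph E d"
  shows "finite {w. adj_pow_delta E k v w \<noteq> 0}"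
proof (induction k)
  case 0 then show ?case by (simp add: adj_pow_delta_def)
next
  case (Suc k) then show ?case by (simp add: adj_pow_Suc supp_adj_op[OF reg])
qed

definition TT :: "('v \<Rightarrow> 'v \<Rightarrow> bool) \<Rightarrow> 'v \<Rightarrow> nat \<Rightarrow> 'v set" where
  "TT E v N = (\<Union>m\<le>N. {w. adj_pow_delta E m v w \<noteq> 0})"

lemma TT_fin: "regular_graph E d \<Longrightarrow> finite (TT E v N)"
  by (simp add: TT_def supp_adj_pow)

lemma TT_sub: "m \<le> N \<Longrightarrow> {w. adj_pow_delta E m v w \<noteq> 0} \<subseteq> TT E v N"
  by (auto simp: TT_def)

lemma TT_v: "v \<in> TT E v N"
  using TT_sub[of 0 N E v] by (auto simp: adj_pow_delta_def)

lemma adj_inner: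
  assumes reg: "regular_graph E d"
  shows "j + k \<le> N \<Longrightarrow> (\<Sum>w\<in>TT E v N. adj_pow_delta E j v w * adj_pow_delta E k v w) = adj_pow_delta E (j+k) v v"
proof (induction j arbitrary: k)
  case 0
  have "(\<Sum>w\<in>TT E v N. adj_pow_delta E 0 v w * adj_pow_delta E k v w)
      = (\<Sum>w\<in>TT E v N. if w = v then adj_pow_delta E k v w else 0)"
    by (intro sum.cong refl) (simp add: adj_pow_delta_def)
  also have "\<dots> = adj_pow_delta E k v v" using TT_fin[OF reg] TT_v[of v E N] by simp
  finally show ?case by simp
next
  case (Suc j)
  have "(\<Sum>w\<in>TT E v N. adj_pow_delta E (Suc j) v w * adj_pow_delta E k v w)
      = (\<Sum>w\<in>TT E v N. adj_pow_delta E j v w * adj_pow_delta E (Suc k) v w)"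
    unfolding adj_pow_Suc
    by (rule adj_op_symm[OF reg TT_fin[OF reg]]; rule TT_sub; use Suc.prems in simp)
  also have "\<dots> = adj_pow_delta E (j + Suc k) v v" using Suc by simp
  finally show ?case by simp
qed



lemma absprod: "\<bar>(x::real) * y\<bar> \<le> x\<^sup>2 + y\<^sup>2"
proof -
  have "0 \<le> (\<bar>x\<bar> - \<bar>y\<bar>)\<^sup>2" by simp
  then have "2*\<bar>x\<bar>*\<bar>y\<bar> \<le> x\<^sup>2 + y\<^sup>2" by (simp add: power2_eq_square algebra_simps)
  moreover have "\<bar>x * y\<bar> = \<bar>x\<bar>*\<bar>y\<bar>" by (simp add: abs_mult)
  moreover have "0 \<le> \<bar>x\<bar>*\<bar>y\<bar>" by simp
  ultimately show ?thesis by linarith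
qed

lemma X_meas_Pi:
  assumes "\<And>v. X v \<in> borel_measurable M"
  shows "(\<lambda>\<omega> v. X v \<omega>) \<in> measurable M (Pi\<^sub>M UNIV (\<lambda>_. borel))"
  by (simp add: assms measurable_abs_UNIV)

lemma distr_same:
  assumes inv: "invariant_process M E X" and vt: "vertex_transitive E"
  shows "distr M borel (X w) = distr M borel (X v0)"
proof -
  have meas: "\<And>v. X v \<in> borel_measurable M" using inv by (simp add: invariant_process_def)
  obtain g where g: "graph_automorphism E g" "g v0 = w" using vt by (auto simp: vertex_transitive_def)
  have eq: "distr M (Pi\<^sub>M UNIV (\<lambda>_. borel)) (\<lambda>\<omega> v. X (g v) \<omega>) =
        distr M (Pi\<^sub>M UNIV (\<lambda>_. borel)) (\<lambda>\<omega> v. X v \<omega>)"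
    using inv g(1) by (simp add: invariant_process_def)
  have m1: "(\<lambda>\<omega> v. X (g v) \<omega>) \<in> measurable M (Pi\<^sub>M UNIV (\<lambda>_. borel))"
    using X_meas_Pi[of "\<lambda>v. X (g v)"] meas by simp
  have m2: "(\<lambda>\<omega> v. X v \<omega>) \<in> measurable M (Pi\<^sub>M UNIV (\<lambda>_. borel))"
    using X_meas_Pi[of X] meas by blast
  have p: "(\<lambda>x. x v0) \<in> measurable (Pi\<^sub>M UNIV (\<lambda>_. borel)) borel"
    by (rule measurable_component_singleton) simp
  have "distr M borel (X w) = distr (distr M (Pi\<^sub>M UNIV (\<lambda>_. borel)) (\<lambda>\<omega> v. X (g v) \<omega>)) borel (\<lambda>x. x v0)"
    using distr_distr[OF p m1] g(2) by (simp add: comp_def)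
  also have "\<dots> = distr M borel (X v0)"
    unfolding eq using distr_distr[OF p m2] by (simp add: comp_def)
  finally show ?thesis .
qed

lemma L2_all:
  assumes inv: "invariant_process M E X" and vt: "vertex_transitive E"
    and L2: "integrable M (\<lambda>\<omega>. (X v0 \<omega>)\<^sup>2)"
  shows "integrable M (\<lambda>\<omega>. (X w \<omega>)\<^sup>2)"
proof -
  have meas: "\<And>v. X v \<in> borel_measurable M" using inv by (simp add: invariant_process_def)
  have "integrable (distr M borel (X v0)) (\<lambda>x. x\<^sup>2)"
    using L2 integrable_distr_eq[of "X v0" M borel "\<lambda>x. x\<^sup>2"] meas by simp
  then have "integrable (distr M borel (X w)) (\<lambda>x. x\<^sup>2)"
    using distr_same[OF inv vt, of w v0] by simp
  then show ?thesis
    using integrable_distr_eq[of "X w" M borel "\<lambda>x. x\<^sup>2"] meas by simp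
qed

lemma prod_int:
  assumes inv: "invariant_process M E X" and vt: "vertex_transitive E"
    and L2: "integrable M (\<lambda>\<omega>. (X v0 \<omega>)\<^sup>2)"
  shows "integrable M (\<lambda>\<omega>. X w \<omega> * X u \<omega>)"
proof -
  have meas: "\<And>v. X v \<in> borel_measurable M" using inv by (simp add: invariant_process_def)
  show ?thesis
  proof (rule Bochner_Integration.integrable_bound)
    show "integrable M (\<lambda>\<omega>. (X w \<omega>)\<^sup>2 + (X u \<omega>)\<^sup>2)"
      using L2_all[OF inv vt L2] by simp
    show "(\<lambda>\<omega>. X w \<omega> * X u \<omega>) \<in> borel_measurable M" using meas by simp
    show "AE x in M. norm (X w x * X u x) \<le> norm ((X w x)\<^sup>2 + (X u x)\<^sup>2)"
      using absprod by simp
  qed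
qed

lemma moment_mu:
  assumes inv: "invariant_process M E X" and vt: "vertex_transitive E"
    and L2: "integrable M (\<lambda>\<omega>. (X v0 \<omega>)\<^sup>2)" and P: "prob_space M"
    and mean0: "(\<integral>\<omega>. X v0 \<omega> \<partial>M) = 0"
  shows "(\<integral>\<omega>. proc_pow E k X v0 \<omega> * X v0 \<omega> \<partial>M)
     = (\<Sum>w | adj_pow_delta E k v0 w \<noteq> 0. adj_pow_delta E k v0 w * cov_struct M X v0 w)"
proof -
  interpret prob_space M by (rule P)
  have meas: "\<And>v. X v \<in> borel_measurable M" using inv by (simp add: invariant_process_def)
  have int1: "\<And>w. integrable M (X w)"
    using square_integrable_imp_integrable[OF meas] L2_all[OF inv vt L2] by blast
  have cov: "cov_struct M X v0 w = (\<integral>\<omega>. X w \<omega> * X v0 \<omega> \<partial>M)" for w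
  proof -
    have "cov_struct M X v0 w = (\<integral>\<omega>. X w \<omega> * X v0 \<omega> - (\<integral>\<omega>'. X w \<omega>' \<partial>M) * X v0 \<omega> \<partial>M)"
      unfolding cov_struct_def mean0 by (simp add: algebra_simps)
    also have "\<dots> = (\<integral>\<omega>. X w \<omega> * X v0 \<omega> \<partial>M) - (\<integral>\<omega>. (\<integral>\<omega>'. X w \<omega>' \<partial>M) * X v0 \<omega> \<partial>M)"
      by (rule Bochner_Integration.integral_diff) (use prod_int[OF inv vt L2] int1 in auto)
    also have "(\<integral>\<omega>. (\<integral>\<omega>'. X w \<omega>' \<partial>M) * X v0 \<omega> \<partial>M) = 0"
      using mean0 by simp
    finally show ?thesis by simp
  qed
  have "(\<integral>\<omega>. proc_pow E k X v0 \<omega> * X v0 \<omega> \<partial>M)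
     = (\<integral>\<omega>. (\<Sum>w | adj_pow_delta E k v0 w \<noteq> 0. adj_pow_delta E k v0 w * (X w \<omega> * X v0 \<omega>)) \<partial>M)"
    unfolding proc_pow_def by (simp add: sum_distrib_right mult.assoc)
  also have "\<dots> = (\<Sum>w | adj_pow_delta E k v0 w \<noteq> 0. (\<integral>\<omega>. adj_pow_delta E k v0 w * (X w \<omega> * X v0 \<omega>) \<partial>M))"
    by (rule Bochner_Integration.integral_sum) (use prod_int[OF inv vt L2] in auto)
  also have "\<dots> = (\<Sum>w | adj_pow_delta E k v0 w \<noteq> 0. adj_pow_delta E k v0 w * cov_struct M X v0 w)"
    by (simp add: cov)
  finally show ?thesis .
qed



lemma fbo_AE: "finite_borel_on m r \<Longrightarrow> AE t in m. t \<in> {-r..r}"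
proof -
  assume f: "finite_borel_on m r"
  have sp: "space m = UNIV" using f unfolding finite_borel_on_def
    by (metis sets_eq_imp_space_eq space_borel)
  have "UNIV - {-r..r} \<in> sets m" using f by (simp add: finite_borel_on_def)
  then have "UNIV - {-r..r} \<in> null_sets m" using f by (simp add: finite_borel_on_def null_sets_def)
  then show ?thesis by (rule AE_I') (auto simp: sp)
qed

lemma fbo_meas: "finite_borel_on m r \<Longrightarrow> f \<in> borel_measurable borel \<Longrightarrow> f \<in> borel_measurable m"
  unfolding finite_borel_on_def by (metis measurable_cong_sets)

lemma fbo_int_bound:
  fixes f :: "real \<Rightarrow> real"
  assumes "finite_borel_on m r" "f \<in> borel_measurable borel" "\<And>t. t \<in> {-r..r} \<Longrightarrow> \<bar>f t\<bar> \<le> B"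
  shows "integrable m f"
proof -
  interpret finite_measure m using assms(1) by (simp add: finite_borel_on_def)
  show ?thesis
    by (rule integrable_const_bound[where B=B]) (use fbo_AE[OF assms(1)] assms(3) fbo_meas[OF assms(1,2)] in auto)
qed

lemma fbo_int_pow: "finite_borel_on m r \<Longrightarrow> integrable m (\<lambda>t. t^k)"
proof (rule fbo_int_bound[where B="r^k"])
  fix t assume "t \<in> {-r..r}"
  then have "\<bar>t\<bar> \<le> r" by auto
  then have "\<bar>t\<bar>^k \<le> r^k" by (intro power_mono) auto
  then show "\<bar>t^k\<bar> \<le> r^k" by (simp add: power_abs)
qed auto

lemma poly_ineq:
  fixes a :: "nat \<Rightarrow> 'v \<Rightarrow> real" and c :: "'v \<Rightarrow> real"
  assumes reg: "regular_graph E d" and adef: "a = (\<lambda>k. adj_pow_delta E k v0)"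
   and nu: "finite_borel_on \<nu> r" and numom: "\<And>k. (\<integral>t. t^k \<partial>\<nu>) = adj_pow_delta E k v0 v0"
   and mu: "finite_borel_on \<mu> r" and mumom: "\<And>k. (\<integral>t. t^k \<partial>\<mu>) = (\<Sum>w | a k w \<noteq> 0. a k w * c w)"
   and summ: "(\<lambda>v. (c v)\<^sup>2) summable_on UNIV"
  shows "(\<integral>t. (\<Sum>i\<le>n. b i * t^i) \<partial>\<mu>)\<^sup>2 \<le> infsum (\<lambda>v. (c v)\<^sup>2) UNIV * (\<integral>t. (\<Sum>i\<le>n. b i * t^i)\<^sup>2 \<partial>\<nu>)"
proof -
  define T where "T = TT E v0 (2*n)"
  have finT: "finite T" using TT_fin[OF reg] by (simp add: T_def)
  define q where "q w = (\<Sum>i\<le>n. b i * a i w)" for w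
  have ext: "(\<Sum>w | a k w \<noteq> 0. a k w * h w) = (\<Sum>w\<in>T. a k w * h w)" if "k \<le> 2*n" for k h
    by (rule sum.mono_neutral_left) (use finT TT_sub[of k "2*n" E v0] that in \<open>auto simp: adef T_def\<close>)
  have "(\<integral>t. (\<Sum>i\<le>n. b i * t^i) \<partial>\<mu>) = (\<Sum>i\<le>n. b i * (\<integral>t. t^i \<partial>\<mu>))"
    by (subst Bochner_Integration.integral_sum) (auto intro: fbo_int_pow[OF mu])
  also have "\<dots> = (\<Sum>i\<le>n. b i * (\<Sum>w\<in>T. a i w * c w))"
    by (intro sum.cong refl) (simp add: mumom ext)
  also have "\<dots> = (\<Sum>w\<in>T. q w * c w)"
    by (simp add: q_def sum_distrib_left sum_distrib_right mult.assoc sum.swap[of _ T])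
  finally have I1: "(\<integral>t. (\<Sum>i\<le>n. b i * t^i) \<partial>\<mu>) = (\<Sum>w\<in>T. q w * c w)" .
  have sq: "(\<Sum>i\<le>n. b i * t^i)\<^sup>2 = (\<Sum>i\<le>n. \<Sum>j\<le>n. b i * b j * t^(i+j))" for t :: real
    by (simp add: power2_eq_square sum_product power_add algebra_simps)
  have "(\<integral>t. (\<Sum>i\<le>n. b i * t^i)\<^sup>2 \<partial>\<nu>) = (\<Sum>i\<le>n. \<Sum>j\<le>n. b i * b j * (\<integral>t. t^(i+j) \<partial>\<nu>))"
    unfolding sq
    by (subst Bochner_Integration.integral_sum, auto intro!: Bochner_Integration.integrable_sum fbo_int_pow[OF nu])
       (subst Bochner_Integration.integral_sum, auto intro!: fbo_int_pow[OF nu])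
  also have "\<dots> = (\<Sum>i\<le>n. \<Sum>j\<le>n. b i * b j * (\<Sum>w\<in>T. a i w * a j w))"
    by (intro sum.cong refl) (simp add: numom adef T_def adj_inner[OF reg])
  also have "\<dots> = (\<Sum>w\<in>T. (q w)\<^sup>2)"
    by (simp add: q_def power2_eq_square sum_product sum_distrib_left sum.swap[of _ T] algebra_simps)
  finally have I2: "(\<integral>t. (\<Sum>i\<le>n. b i * t^i)\<^sup>2 \<partial>\<nu>) = (\<Sum>w\<in>T. (q w)\<^sup>2)" .
  have "(\<Sum>w\<in>T. q w * c w)\<^sup>2 \<le> (\<Sum>w\<in>T. (q w)\<^sup>2) * (\<Sum>w\<in>T. (c w)\<^sup>2)"
    by (rule Cauchy_Schwarz_ineq_sum)
  also have "\<dots> \<le> (\<Sum>w\<in>T. (q w)\<^sup>2) * infsum (\<lambda>v. (c v)\<^sup>2) UNIV"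
    by (intro mult_left_mono finite_sum_le_infsum summ finT) (auto intro: sum_nonneg)
  finally show ?thesis using I1 I2 by (simp add: mult.commute)
qed



lemma dc_fbo:
  fixes g :: "nat \<Rightarrow> real \<Rightarrow> real"
  assumes m: "finite_borel_on m r" and gm: "\<And>n. g n \<in> borel_measurable borel" and hm: "h \<in> borel_measurable borel"
    and lim: "\<And>t. t \<in> {-r..r} \<Longrightarrow> (\<lambda>n. g n t) \<longlonglongrightarrow> h t"
    and bd: "\<And>n t. t \<in> {-r..r} \<Longrightarrow> \<bar>g n t\<bar> \<le> B"
  shows "(\<lambda>n. \<integral>t. g n t \<partial>m) \<longlonglongrightarrow> (\<integral>t. h t \<partial>m)"
proof -
  interpret finite_measure m using m by (simp add: finite_borel_on_def)
  show ?thesis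
  proof (rule integral_dominated_convergence[where w="\<lambda>_. B"])
    show "h \<in> borel_measurable m" by (rule fbo_meas[OF m hm])
    show "\<And>i. g i \<in> borel_measurable m" by (rule fbo_meas[OF m gm])
    show "integrable m (\<lambda>_. B)" by simp
    show "AE x in m. (\<lambda>i. g i x) \<longlonglongrightarrow> h x" using fbo_AE[OF m] lim by auto
    show "\<And>i. AE x in m. norm (g i x) \<le> B" using fbo_AE[OF m] bd by auto
  qed
qed

lemma cont_ineq:
  fixes a :: "nat \<Rightarrow> 'v \<Rightarrow> real" and c :: "'v \<Rightarrow> real" and f :: "real \<Rightarrow> real"
  assumes reg: "regular_graph E d" and adef: "a = (\<lambda>k. adj_pow_delta E k v0)"
   and nu: "finite_borel_on \<nu> r" and numom: "\<And>k. (\<integral>t. t^k \<partial>\<nu>) = adj_pow_delta E k v0 v0"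
   and mu: "finite_borel_on \<mu> r" and mumom: "\<And>k. (\<integral>t. t^k \<partial>\<mu>) = (\<Sum>w | a k w \<noteq> 0. a k w * c w)"
   and summ: "(\<lambda>v. (c v)\<^sup>2) summable_on UNIV"
   and fc: "continuous_on UNIV f" and fb: "\<And>t. \<bar>f t\<bar> \<le> 1"
  shows "(\<integral>t. f t \<partial>\<mu>)\<^sup>2 \<le> infsum (\<lambda>v. (c v)\<^sup>2) UNIV * (\<integral>t. (f t)\<^sup>2 \<partial>\<nu>)"
proof -
  define C where "C = infsum (\<lambda>v. (c v)\<^sup>2) UNIV"
  have "\<forall>n. \<exists>p. real_polynomial_function p \<and> (\<forall>t\<in>{-r..r}. \<bar>f t - p t\<bar> < inverse (real (Suc n)))"
  proof
    fix n
    obtain p where "real_polynomial_function p" "\<And>t. t \<in> {-r..r} \<Longrightarrow> \<bar>f t - p t\<bar> < inverse (real (Suc n))"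
      using Stone_Weierstrass_real_polynomial_function[of "{-r..r}" f "inverse (real (Suc n))"]
        continuous_on_subset[OF fc] by auto
    then show "\<exists>p. real_polynomial_function p \<and> (\<forall>t\<in>{-r..r}. \<bar>f t - p t\<bar> < inverse (real (Suc n)))" by blast
  qed
  then obtain P where P: "\<And>n. real_polynomial_function (P n)"
    "\<And>n t. t \<in> {-r..r} \<Longrightarrow> \<bar>f t - P n t\<bar> < inverse (real (Suc n))" by metis
  have Pform: "\<exists>b N. P n = (\<lambda>x. \<Sum>i\<le>N. b i * x^i)" for n
    using P(1) real_polynomial_function_iff_sum by blast
  have Pc: "continuous_on UNIV (P n)" for n
    using Pform[of n] by (auto intro!: continuous_intros)
  have ineq: "(\<integral>t. P n t \<partial>\<mu>)\<^sup>2 \<le> C * (\<integral>t. (P n t)\<^sup>2 \<partial>\<nu>)" for n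
  proof -
    obtain b N where "P n = (\<lambda>x. \<Sum>i\<le>N. b i * x^i)" using Pform by blast
    then show ?thesis using poly_ineq[OF reg adef nu numom mu mumom summ, of b N] by (simp add: C_def)
  qed
  have conv: "(\<lambda>n. P n t) \<longlonglongrightarrow> f t" if "t \<in> {-r..r}" for t
  proof -
    have "(\<lambda>n. P n t - f t) \<longlonglongrightarrow> 0"
      by (rule Lim_null_comparison[OF _ LIMSEQ_inverse_real_of_nat])
         (use P(2)[OF that] in \<open>auto intro!: always_eventually simp: abs_minus_commute less_imp_le\<close>)
    then have "(\<lambda>n. (P n t - f t) + f t) \<longlonglongrightarrow> 0 + f t" by (intro tendsto_add) auto
    then show ?thesis by simp
  qed
  have bdP: "\<bar>P n t\<bar> \<le> 2" if "t \<in> {-r..r}" for n t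
  proof -
    have "inverse (real (Suc n)) \<le> 1" by (simp add: inverse_le_1_iff)
    then show ?thesis using P(2)[OF that, of n] fb[of t] by linarith
  qed
  have bdP2: "\<bar>(P n t)\<^sup>2\<bar> \<le> 4" if "t \<in> {-r..r}" for n t
  proof -
    have "\<bar>P n t\<bar>^2 \<le> 2^2" by (rule power_mono) (use bdP[OF that] in auto)
    then show ?thesis by (simp add: power_abs[symmetric])
  qed
  have L1: "(\<lambda>n. \<integral>t. P n t \<partial>\<mu>) \<longlonglongrightarrow> (\<integral>t. f t \<partial>\<mu>)"
    by (rule dc_fbo[OF mu _ _ conv bdP]) (auto intro: borel_measurable_continuous_onI Pc fc)
  have L2: "(\<lambda>n. \<integral>t. (P n t)\<^sup>2 \<partial>\<nu>) \<longlonglongrightarrow> (\<integral>t. (f t)\<^sup>2 \<partial>\<nu>)"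
    by (rule dc_fbo[OF nu _ _ _ bdP2])
       (auto intro!: borel_measurable_continuous_onI continuous_intros Pc fc tendsto_power conv)
  have "(\<lambda>n. (\<integral>t. P n t \<partial>\<mu>)\<^sup>2) \<longlonglongrightarrow> (\<integral>t. f t \<partial>\<mu>)\<^sup>2" using L1 by (rule tendsto_power)
  moreover have "(\<lambda>n. C * (\<integral>t. (P n t)\<^sup>2 \<partial>\<nu>)) \<longlonglongrightarrow> C * (\<integral>t. (f t)\<^sup>2 \<partial>\<nu>)" using L2 by (rule tendsto_mult_left)
  ultimately show ?thesis unfolding C_def[symmetric] using ineq by (intro LIMSEQ_le) auto
qed



theorem mainTheorem12:
  fixes E :: "'v \<Rightarrow> 'v \<Rightarrow> bool" and d :: nat and v0 :: 'v
    and M :: "'a measure" and X :: "'v \<Rightarrow> 'a \<Rightarrow> real"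
    and \<nu> \<mu> :: "real measure"
  assumes "infinite (UNIV :: 'v set)"
    and "regular_graph E d"
    and "vertex_transitive E"
    and "finite_borel_on \<nu> (real d)"
    and "\<And>k. (\<integral>t. t ^ k \<partial>\<nu>) = adj_pow_delta E k v0 v0"
    and "prob_space M"
    and "invariant_process M E X"
    and "(\<integral>\<omega>. X v0 \<omega> \<partial>M) = 0"
    and "integrable M (\<lambda>\<omega>. (X v0 \<omega>)\<^sup>2)"
    and "(\<lambda>v. (cov_struct M X v0 v)\<^sup>2) summable_on UNIV"
    and "finite_borel_on \<mu> (real d)"
    and "\<And>k. (\<integral>t. t ^ k \<partial>\<mu>) = (\<integral>\<omega>. proc_pow E k X v0 \<omega> * X v0 \<omega> \<partial>M)"
  shows "absolutely_continuous \<nu> \<mu>"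
proof -
  note reg = assms(2) and nu = assms(4) and mu = assms(11)
  define a where "a = (\<lambda>k. adj_pow_delta E k v0)"
  define c where "c = cov_struct M X v0"
  define C where "C = infsum (\<lambda>v. (c v)\<^sup>2) UNIV"
  have mumom: "\<And>k. (\<integral>t. t^k \<partial>\<mu>) = (\<Sum>w | a k w \<noteq> 0. a k w * c w)"
    using assms(12) moment_mu[OF assms(7,3,9,6,8)] by (simp add: a_def c_def)
  have summ: "(\<lambda>v. (c v)\<^sup>2) summable_on UNIV" using assms(10) by (simp add: c_def)
  interpret fmu: finite_measure \<mu> using mu by (simp add: finite_borel_on_def)
  interpret fnu: finite_measure \<nu> using nu by (simp add: finite_borel_on_def)
  have smu: "sets \<mu> = sets borel" and snu: "sets \<nu> = sets borel"
    using mu nu by (auto simp: finite_borel_on_def)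
  have spmu: "space \<mu> = UNIV" and spnu: "space \<nu> = UNIV"
    using smu snu by (metis sets_eq_imp_space_eq space_borel)+
  have cpt: "emeasure \<mu> K = 0" if K: "compact K" "measure \<nu> K = 0" for K
  proof (cases "K = {}")
    case True then show ?thesis by simp
  next
    case False
    have cK: "closed K" using K compact_imp_closed by blast
    have Kb: "K \<in> sets borel" using cK by simp
    define f where "f n t = max 0 (1 - real n * infdist t K)" for n t
    have fc: "continuous_on UNIV (f n)" for n unfolding f_def by (intro continuous_intros)
    have fb: "\<bar>f n t\<bar> \<le> 1" for n t unfolding f_def using infdist_nonneg[of t K] by auto
    have fb2: "\<bar>(f n t)\<^sup>2\<bar> \<le> 1" for n t
    proof -
      have "\<bar>f n t\<bar>^2 \<le> 1^2" by (rule power_mono) (use fb[of n t] in auto)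
      then show ?thesis by (simp add: power_abs[symmetric])
    qed
    have flim: "(\<lambda>n. f n t) \<longlonglongrightarrow> indicator K t" for t
    proof (cases "t \<in> K")
      case True
      then have "infdist t K = 0" using in_closed_iff_infdist_zero[OF cK False] by simp
      then show ?thesis using True by (simp add: f_def)
    next
      case nt: False
      then have pos: "infdist t K > 0" using in_closed_iff_infdist_zero[OF cK False] infdist_nonneg[of t K] by auto
      obtain N where N: "1 < real N * infdist t K" using reals_Archimedean3[OF pos] by blast
      have "eventually (\<lambda>n. f n t = 0) sequentially"
      proof (rule eventually_sequentiallyI[of N])
        fix n assume "N \<le> n"
        then have "real N * infdist t K \<le> real n * infdist t K" using pos by (intro mult_right_mono) auto
        then show "f n t = 0" using N by (simp add: f_def)
      qed
      then have "(\<lambda>n. f n t) \<longlonglongrightarrow> 0" by (rule tendsto_eventually)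
      then show ?thesis using nt by simp
    qed
    have fm: "f n \<in> borel_measurable borel" for n by (rule borel_measurable_continuous_onI[OF fc])
    have im: "indicator K \<in> borel_measurable borel" using Kb by simp
    have L1: "(\<lambda>n. \<integral>t. f n t \<partial>\<mu>) \<longlonglongrightarrow> (\<integral>t. indicator K t \<partial>\<mu>)"
      by (rule dc_fbo[OF mu fm im flim fb])
    have L2: "(\<lambda>n. \<integral>t. (f n t)\<^sup>2 \<partial>\<nu>) \<longlonglongrightarrow> (\<integral>t. (indicator K t)\<^sup>2 \<partial>\<nu>)"
      by (rule dc_fbo[OF nu _ _ _ fb2]) (use fm im flim in \<open>auto intro: tendsto_power borel_measurable_power\<close>)
    have ineq: "(\<integral>t. f n t \<partial>\<mu>)\<^sup>2 \<le> C * (\<integral>t. (f n t)\<^sup>2 \<partial>\<nu>)" for n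
      unfolding C_def by (rule cont_ineq[OF reg a_def nu assms(5) mu mumom summ fc fb])
    have "(\<lambda>n. (\<integral>t. f n t \<partial>\<mu>)\<^sup>2) \<longlonglongrightarrow> (\<integral>t. indicator K t \<partial>\<mu>)\<^sup>2" using L1 by (rule tendsto_power)
    moreover have "(\<lambda>n. C * (\<integral>t. (f n t)\<^sup>2 \<partial>\<nu>)) \<longlonglongrightarrow> C * (\<integral>t. (indicator K t)\<^sup>2 \<partial>\<nu>)"
      using L2 by (rule tendsto_mult_left)
    ultimately have "(\<integral>t. indicator K t \<partial>\<mu>)\<^sup>2 \<le> C * (\<integral>t. (indicator K t)\<^sup>2 \<partial>\<nu>)"
      using ineq by (intro LIMSEQ_le) auto
    moreover have "(\<lambda>t. (indicator K t :: real)\<^sup>2) = indicator K" by (auto simp: indicator_def)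
    ultimately have "(measure \<mu> K)\<^sup>2 \<le> 0" using K(2) by (simp add: spmu spnu)
    then have "measure \<mu> K = 0" by simp
    then show ?thesis by (simp add: fmu.emeasure_eq_measure)
  qed
  show ?thesis unfolding absolutely_continuous_def
  proof
    fix B assume B: "B \<in> null_sets \<nu>"
    then have Bb: "B \<in> sets borel" and B0: "emeasure \<nu> B = 0" using snu by auto
    have "emeasure \<mu> B = (SUP K \<in> {K. K \<subseteq> B \<and> compact K}. emeasure \<mu> K)"
      by (rule inner_regular[OF smu _ Bb]) simp
    also have "\<dots> \<le> 0"
    proof (rule SUP_least)
      fix K assume K: "K \<in> {K. K \<subseteq> B \<and> compact K}"
      then have "K \<in> sets \<nu>" using snu compact_imp_closed borel_closed by auto
      then have "emeasure \<nu> K \<le> emeasure \<nu> B" using K B by (intro emeasure_mono) auto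
      then have "measure \<nu> K = 0" using B0 by (simp add: fnu.emeasure_eq_measure measure_nonneg antisym)
      then show "emeasure \<mu> K \<le> 0" using cpt K by simp
    qed
    finally show "B \<in> null_sets \<mu>" using Bb smu by auto
  qed
qed


end
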